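(* Let $l$ be a positive integer, let $G$ be an arbitrary graph and let $H$ be an $l$-degenerate graph. Then $AT(G+_S H)\le 3$ if $l\in\{1,2\}$, and $AT(G+_S H)\le l+1$ if $l\ge 3$.
   Context: A graph is $k$-degenerate if its vertices can be successively deleted so that each deleted vertex has degree at most $k$ at the time of deletion. For an orientation $D$, a subdigraph is Eulerian if every vertex has equal in- and outdegree in it; $D$ is an AT-orientation if the numbers of Eulerian subgraphs with an even and with an odd number of arcs differ; $AT(G)$ is the smallest $k$ such that $G$ has an AT-orientation of maximum outdegree at most $k-1$. $S(G)$ is obtained from $G$ by subdividing each edge once, with vertex set identified with $V(G)\cup E(G)$. $G+_S H$ has vertex set $(V(G)\cup E(G))\times V(H)$, with $(u_1,u_2)\sim(v_1,v_2)$ iff [$u_1=v_1\in V(G)$ and $u_2v_2\in E(H)$] or [$u_2=v_2$ and $u_1v_1\in E(S(G))$]. *)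

theory Defs
  imports Main
begin

definition graph :: "'a set \<Rightarrow> 'a set set \<Rightarrow> bool" where
  "graph V E \<longleftrightarrow> finite V \<and> (\<forall>e\<in>E. e \<subseteq> V \<and> card e = 2)"

definition degree :: "'a set \<Rightarrow> 'a set set \<Rightarrow> 'a \<Rightarrow> nat" where
  "degree V E v = card {w\<in>V. {v, w} \<in> E}"

inductive degenerate :: "nat \<Rightarrow> 'a set \<Rightarrow> 'a set set \<Rightarrow> bool" for k where
  empty: "degenerate k {} E"
| delete: "v \<in> V \<Longrightarrow> degree V E v \<le> k \<Longrightarrow> degenerate k (V - {v}) E \<Longrightarrow> degenerate k V E"

text \<open>Orientations as sets of arcs (u,v), meaning u \<rightarrow> v.\<close>
definition is_orientation :: "'a set set \<Rightarrow> ('a \<times> 'a) set \<Rightarrow> bool" where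
  "is_orientation E D \<longleftrightarrow> (\<forall>(u, v)\<in>D. {u, v} \<in> E) \<and>
     (\<forall>u v. {u, v} \<in> E \<longrightarrow> ((u, v) \<in> D \<longleftrightarrow> (v, u) \<notin> D))"

definition outdeg :: "('a \<times> 'a) set \<Rightarrow> 'a \<Rightarrow> nat" where
  "outdeg D v = card {w. (v, w) \<in> D}"

definition indeg :: "('a \<times> 'a) set \<Rightarrow> 'a \<Rightarrow> nat" where
  "indeg D v = card {w. (w, v) \<in> D}"

text \<open>Eulerian (spanning) subdigraphs of D, identified with their arc sets.\<close>
definition eulerian_subgraphs :: "('a \<times> 'a) set \<Rightarrow> ('a \<times> 'a) set set" where
  "eulerian_subgraphs D = {A. A \<subseteq> D \<and> (\<forall>v. indeg A v = outdeg A v)}"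

definition AT_orientation :: "('a \<times> 'a) set \<Rightarrow> bool" where
  "AT_orientation D \<longleftrightarrow>
     card {A \<in> eulerian_subgraphs D. even (card A)} \<noteq> card {A \<in> eulerian_subgraphs D. odd (card A)}"

definition AT :: "'a set \<Rightarrow> 'a set set \<Rightarrow> nat" where
  "AT V E = (LEAST k. \<exists>D. is_orientation E D \<and> AT_orientation D \<and> (\<forall>v\<in>V. outdeg D v + 1 \<le> k))"

text \<open>Subdivision S(G), vertex set V(G) \<union> E(G) encoded as a sum type.\<close>
definition subdiv_vertices :: "'a set \<Rightarrow> 'a set set \<Rightarrow> ('a + 'a set) set" where
  "subdiv_vertices V E = Inl ` V \<union> Inr ` E"

definition subdiv_edges :: "'a set \<Rightarrow> 'a set set \<Rightarrow> ('a + 'a set) set set" where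
  "subdiv_edges V E = {{Inl v, Inr e} | v e. e \<in> E \<and> v \<in> e}"

definition sprod_vertices :: "'a set \<Rightarrow> 'a set set \<Rightarrow> 'b set \<Rightarrow> 'b set set \<Rightarrow> (('a + 'a set) \<times> 'b) set" where
  "sprod_vertices VG EG VH EH = subdiv_vertices VG EG \<times> VH"

definition sprod_adj :: "'a set \<Rightarrow> 'a set set \<Rightarrow> 'b set \<Rightarrow> 'b set set \<Rightarrow>
    ('a + 'a set) \<times> 'b \<Rightarrow> ('a + 'a set) \<times> 'b \<Rightarrow> bool" where
  "sprod_adj VG EG VH EH x y \<longleftrightarrow>
     (fst x = fst y \<and> fst x \<in> Inl ` VG \<and> {snd x, snd y} \<in> EH) \<or>
     (snd x = snd y \<and> {fst x, fst y} \<in> subdiv_edges VG EG)"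

definition sprod_edges :: "'a set \<Rightarrow> 'a set set \<Rightarrow> 'b set \<Rightarrow> 'b set set \<Rightarrow> (('a + 'a set) \<times> 'b) set set" where
  "sprod_edges VG EG VH EH =
     {{x, y} | x y. x \<in> sprod_vertices VG EG VH EH \<and> y \<in> sprod_vertices VG EG VH EH \<and>
                    sprod_adj VG EG VH EH x y}"

end

theory Submission
  imports Defs
begin

lemma degen_rank:
  assumes "degenerate k V E" "finite V"
  shows "\<exists>r::'a\<Rightarrow>nat. inj_on r V \<and> (\<forall>v\<in>V. card {w\<in>V. {v,w}\<in>E \<and> r w < r v} \<le> k)"
  using assms
proof (induction rule: degenerate.induct)
  case (empty E)
  then show ?case by auto
next
  case (delete v V E)
  then obtain r' :: "'a \<Rightarrow> nat" where inj: "inj_on r' (V - {v})"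
    and bd: "\<forall>u\<in>V-{v}. card {w\<in>V-{v}. {u,w}\<in>E \<and> r' w < r' u} \<le> k" by auto
  define N where "N = Suc (Max (insert 0 (r' ` (V-{v}))))"
  have fin: "finite (insert 0 (r' ` (V-{v})))" using delete.prems by auto
  have lt: "r' u < N" if "u \<in> V - {v}" for u
    using Max_ge[OF fin, of "r' u"] that unfolding N_def by auto
  define r where "r = r'(v := N)"
  have "inj_on r V"
  proof (rule inj_onI)
    fix x y assume xy: "x \<in> V" "y \<in> V" "r x = r y"
    show "x = y"
    proof (cases "x = v"; cases "y = v")
      assume "x \<noteq> v" "y \<noteq> v"
      then show ?thesis using xy inj unfolding r_def inj_on_def by simp
    next
      assume "x = v" "y \<noteq> v"
      then show ?thesis using xy lt[of y] unfolding r_def by simp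
    next
      assume "x \<noteq> v" "y = v"
      then show ?thesis using xy lt[of x] unfolding r_def by simp
    qed simp
  qed
  moreover have "card {w\<in>V. {u,w}\<in>E \<and> r w < r u} \<le> k" if u: "u \<in> V" for u
  proof (cases "u = v")
    case True
    have "card {w\<in>V. {u,w}\<in>E \<and> r w < r u} \<le> card {w\<in>V. {v,w}\<in>E}"
      by (rule card_mono) (use delete.prems True in auto)
    then show ?thesis using delete.hyps(2) unfolding degree_def by simp
  next
    case False
    have "{w\<in>V. {u,w}\<in>E \<and> r w < r u} = {w\<in>V-{v}. {u,w}\<in>E \<and> r' w < r' u}"
    proof -
      have ru: "r' u < N" using lt u False by simp
      have ru2: "r u = r' u" using False unfolding r_def by simp
      show ?thesis
      proof (rule set_eqI)
        fix w
        show "w \<in> {w\<in>V. {u,w}\<in>E \<and> r w < r u} \<longleftrightarrow> w \<in> {w\<in>V-{v}. {u,w}\<in>E \<and> r' w < r' u}"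
        proof (cases "w = v")
          case True
          then show ?thesis using ru ru2 unfolding r_def by simp
        next
          case False
          then show ?thesis using ru2 unfolding r_def by simp
        qed
      qed
    qed
    moreover have "u \<in> V - {v}" using u False by simp
    ultimately show ?thesis using bd by simp
  qed
  ultimately show ?case by blast
qed

lemma no_euler:
  fixes r :: "'a \<Rightarrow> nat"
  assumes "finite A" "A \<subseteq> {(u,w). r w < r u}" "\<forall>v. indeg A v = outdeg A v"
  shows "A = {}"
proof (rule ccontr)
  assume ne: "A \<noteq> {}"
  define S where "S = fst ` A \<union> snd ` A"
  have finS: "finite S" "S \<noteq> {}" using assms(1) ne unfolding S_def by auto
  obtain x where x: "x \<in> S" "\<forall>y\<in>S. r y \<le> r x"
  proof -
    have "Max (r ` S) \<in> r ` S" using finS by auto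
    then obtain x where "x \<in> S" "r x = Max (r ` S)" by auto
    then show ?thesis using that finS by auto
  qed
  have noin: "{w. (w, x) \<in> A} = {}"
  proof (rule ccontr)
    assume "{w. (w, x) \<in> A} \<noteq> {}"
    then obtain w where wx: "(w,x) \<in> A" by auto
    then have "w \<in> S" unfolding S_def by (metis UnI1 fst_conv image_eqI)
    then have "r w \<le> r x" using x(2) by blast
    moreover have "r x < r w" using wx assms(2) by blast
    ultimately show False by simp
  qed
  then have "indeg A x = 0" unfolding indeg_def by simp
  then have o: "outdeg A x = 0" using assms(3) by simp
  have "x \<notin> snd ` A"
  proof
    assume "x \<in> snd ` A"
    then obtain p where "p \<in> A" "x = snd p" by blast
    then have "(fst p, x) \<in> A" by simp
    then show False using noin by blast
  qed
  then have "x \<in> fst ` A" using x(1) unfolding S_def by blast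
  then obtain p where "p \<in> A" "x = fst p" by blast
  then have w: "(x, snd p) \<in> A" by simp
  have "finite {w. (x, w) \<in> A}"
  proof (rule finite_subset[of _ "snd ` A"])
    show "{w. (x, w) \<in> A} \<subseteq> snd ` A" by (auto intro: image_eqI[of _ snd "(x, _)"])
    show "finite (snd ` A)" using assms(1) by simp
  qed
  then have "outdeg A x > 0" unfolding outdeg_def using w
    by (metis (mono_tags, lifting) card_gt_0_iff empty_iff mem_Collect_eq)
  then show False using o by simp
qed

lemma single_even: "{A \<in> {{}}. even (card A)} = {{}}"
  by auto

lemma single_odd: "{A \<in> {{}}. odd (card A)} = {}"
  by auto

lemma rank_orient:
  fixes r :: "'a \<Rightarrow> nat"
  assumes g: "graph V E" and adj: "\<And>u w. {u,w} \<in> E \<Longrightarrow> r u \<noteq> r w"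
  defines "D \<equiv> {(u,w). {u,w} \<in> E \<and> r w < r u}"
  shows "is_orientation E D" "AT_orientation D"
    "\<And>v. outdeg D v = card {w. {v,w} \<in> E \<and> r w < r v}"
proof -
  show "is_orientation E D"
    unfolding is_orientation_def
  proof (intro conjI allI impI)
    show "\<forall>(u, v)\<in>D. {u, v} \<in> E" unfolding D_def by blast
    fix u v assume uv: "{u, v} \<in> E"
    have vu: "{v, u} \<in> E" using uv by (simp add: insert_commute)
    have "r u \<noteq> r v" using adj[OF uv] .
    then show "(u, v) \<in> D \<longleftrightarrow> (v, u) \<notin> D" unfolding D_def using uv vu by auto
  qed
  have finD: "finite D"
  proof (rule finite_subset[of _ "V \<times> V"])
    show "D \<subseteq> V \<times> V" using g unfolding D_def graph_def by auto
    show "finite (V \<times> V)" using g unfolding graph_def by auto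
  qed
  have "eulerian_subgraphs D = {{}}"
  proof -
    have "A = {}" if A: "A \<in> eulerian_subgraphs D" for A
    proof -
      have AD: "A \<subseteq> D" and bal: "\<forall>v. indeg A v = outdeg A v"
        using A unfolding eulerian_subgraphs_def by blast+
      have "finite A" using finite_subset[OF AD finD] .
      moreover have "A \<subseteq> {(u,w). r w < r u}" using AD unfolding D_def by blast
      ultimately show ?thesis by (rule no_euler[OF _ _ bal])
    qed
    moreover have "{} \<in> eulerian_subgraphs D"
      unfolding eulerian_subgraphs_def indeg_def outdeg_def by auto
    ultimately show ?thesis by blast
  qed
  then have h12: "{A \<in> eulerian_subgraphs D. even (card A)} = {{}}"
    "{A \<in> eulerian_subgraphs D. odd (card A)} = {}"
    by (simp_all only: single_even single_odd)
  show "AT_orientation D" unfolding AT_orientation_def h12 by simp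
  show "\<And>v. outdeg D v = card {w. {v,w} \<in> E \<and> r w < r v}"
    unfolding outdeg_def D_def by simp
qed

lemma sedge_iff:
  "{x,w} \<in> sprod_edges VG EG VH EH \<longleftrightarrow>
     x \<in> sprod_vertices VG EG VH EH \<and> w \<in> sprod_vertices VG EG VH EH \<and> sprod_adj VG EG VH EH x w"
proof
  have sym: "sprod_adj VG EG VH EH a b = sprod_adj VG EG VH EH b a" for a b
    unfolding sprod_adj_def by (cases a; cases b) (auto simp: insert_commute)
  assume "{x,w} \<in> sprod_edges VG EG VH EH"
  then obtain a b where ab: "{x,w} = {a,b}" "a \<in> sprod_vertices VG EG VH EH"
    "b \<in> sprod_vertices VG EG VH EH" "sprod_adj VG EG VH EH a b"
    unfolding sprod_edges_def by blast
  then have "(x = a \<and> w = b) \<or> (x = b \<and> w = a)" by (auto simp: doubleton_eq_iff)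
  then show "x \<in> sprod_vertices VG EG VH EH \<and> w \<in> sprod_vertices VG EG VH EH \<and> sprod_adj VG EG VH EH x w"
    using ab sym by blast
next
  assume "x \<in> sprod_vertices VG EG VH EH \<and> w \<in> sprod_vertices VG EG VH EH \<and> sprod_adj VG EG VH EH x w"
  then show "{x,w} \<in> sprod_edges VG EG VH EH" unfolding sprod_edges_def by blast
qed

lemma subdiv_Inr: "{Inr e, y} \<in> subdiv_edges VG EG \<longleftrightarrow> (\<exists>u. y = Inl u \<and> u \<in> e \<and> e \<in> EG)"
  unfolding subdiv_edges_def by (auto simp: doubleton_eq_iff)

lemma subdiv_Inl: "{Inl v, y} \<in> subdiv_edges VG EG \<longleftrightarrow> (\<exists>e. y = Inr e \<and> v \<in> e \<and> e \<in> EG)"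
  unfolding subdiv_edges_def by (auto simp: doubleton_eq_iff)

lemma sprod_graph:
  assumes "graph VG EG" "graph VH EH"
  shows "graph (sprod_vertices VG EG VH EH) (sprod_edges VG EG VH EH)"
proof -
  have fE: "finite EG"
    by (rule finite_subset[of _ "Pow VG"]) (use assms(1) in \<open>auto simp: graph_def\<close>)
  have c1: "finite (sprod_vertices VG EG VH EH)"
    using fE assms unfolding sprod_vertices_def subdiv_vertices_def graph_def by auto
  have neq: "x \<noteq> y" if "sprod_adj VG EG VH EH x y" for x y
  proof
    assume "x = y"
    then have "{snd x, snd x} \<in> EH \<or> {fst x, fst x} \<in> subdiv_edges VG EG"
      using that unfolding sprod_adj_def by auto
    moreover have "{snd x, snd x} \<notin> EH" using assms(2) unfolding graph_def by fastforce
    moreover have "{fst x, fst x} \<notin> subdiv_edges VG EG"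
      by (cases "fst x") (simp_all only: subdiv_Inl subdiv_Inr, auto)
    ultimately show False by blast
  qed
  have c2: "e \<subseteq> sprod_vertices VG EG VH EH \<and> card e = 2" if ee: "e \<in> sprod_edges VG EG VH EH" for e
  proof -
    obtain x y where "e = {x,y}" "x \<in> sprod_vertices VG EG VH EH" "y \<in> sprod_vertices VG EG VH EH"
      "sprod_adj VG EG VH EH x y" using ee unfolding sprod_edges_def by blast
    moreover have "x \<noteq> y" using calculation(4) by (rule neq)
    ultimately show ?thesis by simp
  qed
  show ?thesis unfolding graph_def using c1 c2 by blast
qed

theorem corollary3p1:
  fixes VG :: "'a set" and EG :: "'a set set" and VH :: "'b set" and EH :: "'b set set"
    and l :: nat
  assumes "graph VG EG" and "graph VH EH" and "l \<ge> 1" and "degenerate l VH EH"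
  shows "AT (sprod_vertices VG EG VH EH) (sprod_edges VG EG VH EH)
           \<le> (if l \<le> 2 then 3 else l + 1)"
proof -
  let ?V = "sprod_vertices VG EG VH EH" and ?E = "sprod_edges VG EG VH EH"
  have fVH: "finite VH" using assms(2) unfolding graph_def by auto
  obtain rH :: "'b \<Rightarrow> nat" where injH: "inj_on rH VH"
    and bdH: "\<forall>v\<in>VH. card {w\<in>VH. {v,w}\<in>EH \<and> rH w < rH v} \<le> l"
    using degen_rank[OF assms(4) fVH] by blast
  define M where "M = Suc (Max (insert 0 (rH ` VH)))"
  have fin: "finite (insert 0 (rH ` VH))" using fVH by auto
  have ltM: "rH u < M" if "u \<in> VH" for u
    using Max_ge[OF fin, of "rH u"] that unfolding M_def by auto
  define R where "R x = (case fst x of Inl _ \<Rightarrow> rH (snd x) | Inr _ \<Rightarrow> M)" for x :: "('a + 'a set) \<times> 'b"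
  have EHV: "h \<in> VH" "h' \<in> VH" if "{h,h'} \<in> EH" for h h'
    using that assms(2) unfolding graph_def by auto
  have EHne: "h \<noteq> h'" if "{h,h'} \<in> EH" for h h'
    using that assms(2) unfolding graph_def by fastforce
  have gr: "graph ?V ?E" by (rule sprod_graph[OF assms(1,2)])
  have adj: "R u \<noteq> R w" if "{u,w} \<in> ?E" for u w
  proof -
    have a: "sprod_adj VG EG VH EH u w" "u \<in> ?V" "w \<in> ?V" using that sedge_iff by blast+
    obtain a1 b1 a2 b2 where uw: "u = (a1,b1)" "w = (a2,b2)" by fastforce
    show ?thesis
    proof (cases "a1 = a2 \<and> a1 \<in> Inl ` VG \<and> {b1,b2} \<in> EH")
      case True
      then show ?thesis using injH EHV[of b1 b2] EHne[of b1 b2] uw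
        unfolding R_def by (auto simp: inj_on_def)
    next
      case False
      then have "b1 = b2" "{a1,a2} \<in> subdiv_edges VG EG"
        using a(1) uw unfolding sprod_adj_def by auto
      then have c: "(\<exists>x e. a1 = Inl x \<and> a2 = Inr e) \<or> (\<exists>x e. a1 = Inr e \<and> a2 = Inl x)"
        unfolding subdiv_edges_def by (auto simp: doubleton_eq_iff)
      have "b1 \<in> VH" using a uw unfolding sprod_vertices_def by auto
      then show ?thesis using c ltM[of b1] uw \<open>b1 = b2\<close> unfolding R_def by auto
    qed
  qed
  define D where "D = {(u,w). {u,w} \<in> ?E \<and> R w < R u}"
  have o1: "is_orientation ?E D" and o2: "AT_orientation D"
    and o3: "\<And>v. outdeg D v = card {w. {v,w} \<in> ?E \<and> R w < R v}"
    using rank_orient[of ?V ?E R, OF gr adj] unfolding D_def by blast+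
  have bd: "outdeg D x \<le> max l 2" if x: "x \<in> ?V" for x
  proof -
    obtain a h where xa: "x = (a,h)" by fastforce
    have hV: "h \<in> VH" using x xa unfolding sprod_vertices_def by auto
    show ?thesis
    proof (cases a)
      case (Inl v)
      have sub: "{w. {x,w} \<in> ?E \<and> R w < R x} \<subseteq> (\<lambda>h'. (Inl v :: 'a + 'a set, h')) ` {w\<in>VH. {h,w}\<in>EH \<and> rH w < rH h}"
      proof
        fix w assume w: "w \<in> {w. {x,w} \<in> ?E \<and> R w < R x}"
        obtain a2 b2 where w2: "w = (a2,b2)" by fastforce
        have a: "sprod_adj VG EG VH EH x w" "w \<in> ?V" using w sedge_iff by blast+
        show "w \<in> (\<lambda>h'. (Inl v :: 'a + 'a set, h')) ` {w\<in>VH. {h,w}\<in>EH \<and> rH w < rH h}"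
        proof (cases "a2 = a \<and> {h,b2} \<in> EH")
          case True
          then show ?thesis using w w2 xa Inl a(2) unfolding R_def sprod_vertices_def by auto
        next
          case False
          then have "b2 = h" "{a, a2} \<in> subdiv_edges VG EG" using a(1) w2 xa unfolding sprod_adj_def by auto
          then obtain e where "a2 = Inr e" using Inl subdiv_Inl by metis
          then show ?thesis using w w2 xa Inl ltM[OF hV] unfolding R_def by auto
        qed
      qed
      have "card {w. {x,w} \<in> ?E \<and> R w < R x} \<le> card ((\<lambda>h'. (Inl v :: 'a + 'a set, h')) ` {w\<in>VH. {h,w}\<in>EH \<and> rH w < rH h})"
        apply (rule card_mono) using fVH sub by auto
      also have "\<dots> \<le> card {w\<in>VH. {h,w}\<in>EH \<and> rH w < rH h}" by (rule card_image_le) (use fVH in auto)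
      also have "\<dots> \<le> l" using bdH hV by auto
      finally show ?thesis using o3 by simp
    next
      case (Inr e)
      have eG: "e \<in> EG" using x xa Inr unfolding sprod_vertices_def subdiv_vertices_def by auto
      have "{w. {x,w} \<in> ?E \<and> R w < R x} \<subseteq> (\<lambda>u. (Inl u :: 'a + 'a set, h)) ` e"
      proof
        fix w assume w: "w \<in> {w. {x,w} \<in> ?E \<and> R w < R x}"
        obtain a2 b2 where w2: "w = (a2,b2)" by fastforce
        have a: "sprod_adj VG EG VH EH x w" using w sedge_iff by blast
        then have "b2 = h" "{Inr e, a2} \<in> subdiv_edges VG EG" using w2 xa Inr unfolding sprod_adj_def by auto
        then obtain u where "a2 = Inl u" "u \<in> e" using subdiv_Inr by metis
        then have "w = (\<lambda>u. (Inl u :: 'a + 'a set, h)) u" using w2 \<open>b2 = h\<close> by simp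
        then show "w \<in> (\<lambda>u. (Inl u :: 'a + 'a set, h)) ` e" using \<open>u \<in> e\<close> by blast
      qed
      then have "card {w. {x,w} \<in> ?E \<and> R w < R x} \<le> card ((\<lambda>u. (Inl u :: 'a + 'a set, h)) ` e)"
        by (rule card_mono[rotated]) (use eG assms(1) in \<open>auto simp: graph_def card_ge_0_finite\<close>)
      also have "\<dots> \<le> card e" by (rule card_image_le) (use eG assms(1) in \<open>auto simp: graph_def card_ge_0_finite\<close>)
      also have "\<dots> = 2" using eG assms(1) by (auto simp: graph_def)
      finally show ?thesis using o3 by simp
    qed
  qed
  have P: "\<exists>D. is_orientation ?E D \<and> AT_orientation D \<and>
      (\<forall>v\<in>?V. outdeg D v + 1 \<le> (if l \<le> 2 then 3 else l + 1))"
  proof (intro exI[of _ D] conjI ballI)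
    fix v assume "v \<in> ?V"
    then have "outdeg D v \<le> max l 2" by (rule bd)
    then show "outdeg D v + 1 \<le> (if l \<le> 2 then 3 else l + 1)"
      by (cases "l \<le> 2") (simp_all add: max_def)
  qed (fact o1 o2)+
  show ?thesis unfolding AT_def by (rule Least_le) (rule P)
qed

end
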